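(* Let $p=d/n$, and let $\sigma,\theta$ satisfy the hypotheses: $\theta>1$, $\sigma\in(0,1]$, $\left(\frac{\sigma e d}{2\theta}\right)^{\theta}\le \frac{\sigma}{2e}$ and $d=o(n^{1-1/\theta})$. Let $\Delta,\tau>0$ with $m:=(\Delta-2\theta)\tau>1$, $$\left(\frac{\sigma e d}{m}\right)^{m}\le \frac{\sigma}{4e},$$ and $d=o(n^{1-1/m})$. Then w.h.p. $G_{n,p}$ contains no pair of sets $T\subseteq S\subseteq[n]$ with $|S|=s\le\sigma n$, $|T|\ge \tau s$, and $d_S(v)\ge \Delta$ for every $v\in T$.
   Context: $G_{n,p}$ is the binomial random graph on $[n]$; $d_S(v)$ denotes the number of neighbors of $v$ in $S$. W.h.p. means with probability tending to 1 as $n\to\infty$. *)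

theory Defs
  imports "HOL-Probability.Probability" "HOL-Library.Landau_Symbols"
begin

text \<open>Binomial random graph G(n,p) on the vertex set [n] = {0..<n}: each unordered pair
  {i,j} with i < j < n (encoded as the pair (i,j)) is an edge independently with probability p.
  A sample is an indicator function on pairs (False outside the admissible pairs).\<close>
definition gnp :: "nat \<Rightarrow> real \<Rightarrow> (nat \<times> nat \<Rightarrow> bool) pmf" where
  "gnp n p = Pi_pmf {(i, j). i < j \<and> j < n} False (\<lambda>_. bernoulli_pmf p)"

definition adj :: "(nat \<times> nat \<Rightarrow> bool) \<Rightarrow> nat \<Rightarrow> nat \<Rightarrow> bool" where
  "adj G u v \<longleftrightarrow> u \<noteq> v \<and> G (min u v, max u v)"

definition degIn :: "(nat \<times> nat \<Rightarrow> bool) \<Rightarrow> nat set \<Rightarrow> nat \<Rightarrow> nat" where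
  "degIn G S v = card {u \<in> S. adj G u v}"

definition bad_pair :: "nat \<Rightarrow> real \<Rightarrow> real \<Rightarrow> real \<Rightarrow> (nat \<times> nat \<Rightarrow> bool) \<Rightarrow> bool" where
  "bad_pair n \<sigma> \<tau> \<Delta> G \<longleftrightarrow>
     (\<exists>S T. T \<subseteq> S \<and> S \<subseteq> {..<n} \<and> S \<noteq> {} \<and> real (card S) \<le> \<sigma> * real n \<and>
            real (card T) \<ge> \<tau> * real (card S) \<and> (\<forall>v\<in>T. real (degIn G S v) \<ge> \<Delta>))"

end

theory Submission
  imports Defs "HOL-Real_Asymp.Real_Asymp"
begin

lemma fact_ge_pow_e: "(real k / exp 1) ^ k \<le> fact k"
proof -
  have s: "(\<lambda>n. real k ^ n / fact n) sums exp (real k)"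
    using exp_converges[of "real k"] by (simp add: divide_inverse mult.commute)
  have "(\<Sum>n\<in>{k}. real k ^ n / fact n) \<le> (\<Sum>n. real k ^ n / fact n)"
    by (rule sum_le_suminf) (use s sums_summable in auto)
  hence "real k ^ k / fact k \<le> exp (real k)" using s sums_unique by force
  hence "real k ^ k \<le> exp (real k) * fact k" by (simp add: divide_le_eq)
  moreover have "exp (real k) = exp 1 ^ k" by (simp add: exp_of_nat_mult[symmetric])
  ultimately show ?thesis by (simp add: power_divide divide_le_eq mult.commute)
qed

lemma binom_le_e:
  assumes "k \<ge> 1"
  shows "real (n choose k) \<le> (exp 1 * real n / real k) ^ k"
proof (cases "k \<le> n")
  case True
  have "fact k * real (n choose k) = fact n / fact (n - k)"
    using True by (rule fact_binomial)
  also have "\<dots> \<le> real n ^ k"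
  proof -
    have "fact n div fact (n - k) \<le> n ^ k" by (rule fact_div_fact_le_pow[OF True])
    moreover have "fact (n - k) dvd (fact n :: nat)" using True by (simp add: fact_dvd)
    ultimately have "real (fact n div fact (n - k)) \<le> real n ^ k"
      by (metis of_nat_le_iff of_nat_power)
    moreover have "real (fact n div fact (n - k)) = fact n / fact (n - k)"
      using \<open>fact (n - k) dvd (fact n :: nat)\<close> by (simp add: real_of_nat_div)
    ultimately show ?thesis by simp
  qed
  finally have 1: "fact k * real (n choose k) \<le> real n ^ k" .
  have kp: "real k > 0" using assms by simp
  have "(real k / exp 1) ^ k * real (n choose k) \<le> fact k * real (n choose k)"
    by (rule mult_right_mono[OF fact_ge_pow_e]) simp
  with 1 have "(real k / exp 1) ^ k * real (n choose k) \<le> real n ^ k" by linarith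
  moreover have "(real k / exp 1) ^ k > 0" using kp by simp
  ultimately have "real (n choose k) \<le> real n ^ k / (real k / exp 1) ^ k"
    by (simp add: le_divide_eq mult.commute)
  also have "\<dots> = (real n / (real k / exp 1)) ^ k" by (simp add: power_divide power_mult_distrib)
  also have "real n / (real k / exp 1) = exp 1 * real n / real k" by simp
  finally show ?thesis .
next
  case False
  hence "real (n choose k) = 0" by (simp add: binomial_eq_0)
  moreover have "0 \<le> (exp 1 * real n / real k) ^ k" by simp
  ultimately show ?thesis by linarith
qed

lemma powr_lt1_imp: fixes z g c :: real assumes "0 \<le> z" "0 < g" "z powr g \<le> c" "c < 1" shows "z \<le> 1"
proof (rule ccontr)
  assume "\<not> z \<le> 1" hence "z > 1" by linarith
  hence "z powr g > 1" using powr_less_mono2[OF assms(2), of 1 z] by simp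
  thus False using assms by simp
qed

definition adm :: "nat \<Rightarrow> (nat \<times> nat) set" where "adm n = {(i,j). i<j \<and> j<n}"
definition ev :: "(nat \<times> nat) set \<Rightarrow> (nat \<times> nat \<Rightarrow> bool) set" where "ev F = {G. \<forall>e\<in>F. G e}"

lemma finite_adm: "finite (adm n)"
  by (rule finite_subset[of _ "{..<n} \<times> {..<n}"]) (auto simp: adm_def)

lemma prob_edges:
  assumes F: "F \<subseteq> adm n" and p: "0 \<le> p" "p \<le> 1"
  shows "measure_pmf.prob (gnp n p) (ev F) = p ^ card F"
proof -
  define B where "B = (\<lambda>e. if e \<in> F then {True} else (UNIV :: bool set))"
  have finF: "finite F" using F finite_adm finite_subset by blast
  have "ev F = Pi (adm n) B" using F by (auto simp: ev_def B_def Pi_def)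
  hence "measure_pmf.prob (gnp n p) (ev F) = (\<Prod>e\<in>adm n. measure_pmf.prob (bernoulli_pmf p) (B e))"
    unfolding gnp_def adm_def[symmetric] by (simp add: measure_Pi_pmf_Pi finite_adm)
  also have "\<dots> = (\<Prod>e\<in>adm n. if e \<in> F then p else 1)"
    by (intro prod.cong refl) (simp add: B_def measure_pmf_single p)
  also have "\<dots> = (\<Prod>e\<in>adm n \<inter> {e. e \<in> F}. p) * (\<Prod>e\<in>adm n \<inter> - {e. e \<in> F}. 1)"
    by (rule prod.If_cases[OF finite_adm])
  also have "adm n \<inter> {e. e \<in> F} = F" using F by blast
  finally show ?thesis by simp
qed

lemma fam_bound:
  assumes P: "P \<subseteq> adm n" and p: "0 \<le> p" "p \<le> 1" and Q: "real (card P) \<le> Q" and k: "k \<ge> 1"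
  shows "measure_pmf.prob (gnp n p) (\<Union>F\<in>{F. F \<subseteq> P \<and> card F = k}. ev F) \<le> (exp 1 * Q * p / real k) ^ k"
proof -
  have finP: "finite P" using P finite_adm finite_subset by blast
  have fin: "finite {F. F \<subseteq> P \<and> card F = k}" using finP by (simp add: finite_subsets_at_top_def)
  have "measure_pmf.prob (gnp n p) (\<Union>F\<in>{F. F \<subseteq> P \<and> card F = k}. ev F)
        \<le> (\<Sum>F\<in>{F. F \<subseteq> P \<and> card F = k}. measure_pmf.prob (gnp n p) (ev F))"
    by (rule measure_pmf.finite_measure_subadditive_finite) (use finP in auto)
  also have "\<dots> = (\<Sum>F\<in>{F. F \<subseteq> P \<and> card F = k}. p ^ k)"
    by (intro sum.cong refl) (use P p in \<open>auto simp: prob_edges\<close>)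
  also have "\<dots> = real (card P choose k) * p ^ k" by (simp add: n_subsets finP)
  also have "\<dots> \<le> (exp 1 * real (card P) / real k) ^ k * p ^ k"
    by (intro mult_right_mono binom_le_e k) (use p in simp)
  also have "\<dots> = (exp 1 * real (card P) * p / real k) ^ k" by (simp add: power_mult_distrib[symmetric])
  also have "\<dots> \<le> (exp 1 * Q * p / real k) ^ k"
    by (intro power_mono divide_right_mono mult_right_mono mult_left_mono Q) (use p in auto)
  finally show ?thesis .
qed

lemma term_bound:
  fixes n t :: nat and \<sigma> \<gamma> D a b :: real
  assumes n: "n > 0" and t: "t \<ge> 1" "real t \<le> \<sigma> * real n" and \<sigma>: "\<sigma> > 0" "\<sigma> \<le> 1"
    and \<gamma>: "\<gamma> > 1" and D: "D \<ge> 0" and a: "a > 0" and b: "b \<ge> 1"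
    and hyp: "(\<sigma> * exp 1 * D / (a * \<gamma>)) powr \<gamma> \<le> \<sigma> / (2 * b * exp 1)"
  shows "real (n choose t) * b ^ t * (exp 1 * (real t ^ 2 / a) * (D / real n) / real (nat \<lceil>\<gamma> * real t\<rceil>)) ^ (nat \<lceil>\<gamma> * real t\<rceil>)
         \<le> ((real t / (\<sigma> * real n)) powr (\<gamma> - 1) / 2) ^ t"
proof -
  define k where "k = nat \<lceil>\<gamma> * real t\<rceil>"
  have tpos: "real t > 0" using t by simp
  have npos: "real n > 0" using n by simp
  have kr: "real k \<ge> \<gamma> * real t" unfolding k_def by linarith
  have gt: "\<gamma> * real t > 0" using \<gamma> tpos by simp
  hence kpos: "real k > 0" using kr by linarith
  hence k1: "k \<ge> 1" by simp
  define r where "r = real t / (\<sigma> * real n)"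
  have r0: "r > 0" unfolding r_def using tpos npos \<sigma> by simp
  have r1: "r \<le> 1" unfolding r_def using t \<sigma> npos by (simp add: divide_le_eq)
  define z0 where "z0 = \<sigma> * exp 1 * D / (a * \<gamma>)"
  have z00: "z0 \<ge> 0" unfolding z0_def using \<sigma> D a \<gamma> by simp
  have c1: "\<sigma> / (2 * b * exp 1) < 1"
  proof -
    have e2: "exp 1 \<ge> (2::real)" using exp_ge_add_one_self[of 1] by simp
    have "b * exp 1 \<ge> 1 * 2" by (rule mult_mono) (use b e2 in auto)
    hence "2 * b * exp 1 > 1" by simp
    hence "\<sigma> < 2 * b * exp 1" using \<sigma> by linarith
    thus ?thesis using b by (simp add: divide_less_eq)
  qed
  have z01: "z0 \<le> 1" using powr_lt1_imp[OF z00 _ _ c1, of \<gamma>] hyp \<gamma> unfolding z0_def by simp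
  define y where "y = r * z0"
  have y0: "y \<ge> 0" unfolding y_def using r0 z00 by simp
  have y1: "y \<le> 1" unfolding y_def using r0 r1 z00 z01 by (simp add: mult_le_one)
  define base where "base = exp 1 * (real t ^ 2 / a) * (D / real n) / real k"
  have base0: "base \<ge> 0" unfolding base_def using a D npos kpos by simp
  have "base \<le> exp 1 * (real t ^ 2 / a) * (D / real n) / (\<gamma> * real t)"
    unfolding base_def using a D npos kpos kr gt by (intro divide_left_mono) auto
  also have "\<dots> = y" unfolding y_def r_def z0_def using tpos npos \<sigma> a \<gamma>
    by (simp add: field_simps power2_eq_square)
  finally have bby: "base \<le> y" .
  have "base ^ k \<le> y ^ k" using base0 bby by (intro power_mono) auto
  also have "y ^ k \<le> y powr (\<gamma> * real t)"
  proof (cases "y = 0")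
    case True thus ?thesis using k1 by (simp add: power_0_left)
  next
    case False
    hence "y > 0" using y0 by simp
    hence "y ^ k = y powr real k" by (simp add: powr_realpow)
    also have "\<dots> \<le> y powr (\<gamma> * real t)" by (rule powr_mono'[OF kr y0 y1])
    finally show ?thesis .
  qed
  also have "y powr (\<gamma> * real t) = (y powr \<gamma>) ^ t"
    using t by (simp add: powr_powr[symmetric] powr_realpow' y0)
  finally have yk: "base ^ k \<le> (y powr \<gamma>) ^ t" .
  have "y powr \<gamma> = r powr \<gamma> * z0 powr \<gamma>" unfolding y_def using r0 z00 by (simp add: powr_mult)
  also have "\<dots> \<le> r powr \<gamma> * (\<sigma> / (2 * b * exp 1))" using hyp unfolding z0_def
    by (intro mult_left_mono) auto
  finally have yg: "y powr \<gamma> \<le> r powr \<gamma> * (\<sigma> / (2 * b * exp 1))" .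
  have "real (n choose t) * b ^ t * base ^ k \<le> (exp 1 * real n / real t) ^ t * b ^ t * (r powr \<gamma> * (\<sigma> / (2 * b * exp 1))) ^ t"
  proof -
    have "(y powr \<gamma>) ^ t \<le> (r powr \<gamma> * (\<sigma> / (2 * b * exp 1))) ^ t"
      by (intro power_mono yg) simp
    hence bk: "base ^ k \<le> (r powr \<gamma> * (\<sigma> / (2 * b * exp 1))) ^ t" using yk by linarith
    show ?thesis using b t base0 by (intro mult_mono binom_le_e power_mono bk) auto
  qed
  also have "\<dots> = (exp 1 * real n / real t * b * (r powr \<gamma> * (\<sigma> / (2 * b * exp 1)))) ^ t"
    by (simp only: power_mult_distrib)
  also have "exp 1 * real n / real t * b * (r powr \<gamma> * (\<sigma> / (2 * b * exp 1))) = r powr \<gamma> / r / 2"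
    unfolding r_def using tpos npos b \<sigma> by (simp add: field_simps)
  also have "r powr \<gamma> / r = r powr (\<gamma> - 1)" using r0 by (simp add: powr_diff)
  finally show ?thesis unfolding base_def k_def r_def .
qed

lemma lim_aux: fixes \<alpha> \<sigma> c :: real assumes "\<alpha> > 0" "\<sigma> > 0"
  shows "(\<lambda>n. c / (\<sigma> * real n) powr \<alpha>) \<longlonglongrightarrow> 0"
proof -
  have "((\<lambda>x::real. c / (\<sigma> * x) powr \<alpha>) \<longlongrightarrow> 0) at_top" using assms by real_asymp
  thus ?thesis by (rule filterlim_compose[OF _ filterlim_real_sequentially])
qed

lemma poly_geo_bound: fixes \<alpha> :: real
  obtains K where "K > 0" "\<And>t::nat. real t powr \<alpha> \<le> K * sqrt 2 ^ t"
proof -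
  have "((\<lambda>x::real. x powr \<alpha> / sqrt 2 powr x) \<longlongrightarrow> 0) at_top" by real_asymp
  hence "(\<lambda>t::nat. real t powr \<alpha> / sqrt 2 powr real t) \<longlonglongrightarrow> 0"
    by (rule filterlim_compose[OF _ filterlim_real_sequentially])
  hence "Bseq (\<lambda>t::nat. real t powr \<alpha> / sqrt 2 powr real t)" by (rule convergent_imp_Bseq[OF convergentI])
  then obtain K where K: "K > 0" "\<And>t. norm (real t powr \<alpha> / sqrt 2 powr real t) \<le> K"
    by (auto simp: Bseq_def)
  have "real t powr \<alpha> \<le> K * sqrt 2 ^ t" for t::nat
  proof -
    have "real t powr \<alpha> / sqrt 2 ^ t \<le> K" using K(2)[of t] by (simp add: powr_realpow)
    thus ?thesis by (simp add: divide_le_eq)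
  qed
  thus ?thesis using that K(1) by blast
qed

lemma sum_to_0:
  fixes \<alpha> \<sigma> :: real assumes \<alpha>: "\<alpha> > 0" and \<sigma>: "\<sigma> > 0"
  shows "(\<lambda>n. \<Sum>t\<in>{1..nat \<lfloor>\<sigma> * real n\<rfloor>}. ((real t / (\<sigma> * real n)) powr \<alpha> / 2) ^ t) \<longlonglongrightarrow> 0"
proof -
  obtain K where K: "K > 0" "\<And>t::nat. real t powr \<alpha> \<le> K * sqrt 2 ^ t" using poly_geo_bound[of \<alpha>] by blast
  define q where "q = 1 / sqrt (2::real)"
  have q0: "q > 0" and q1: "q < 1" unfolding q_def by auto
  define M where "M = K * (1 / (1 - q))"
  have bound: "(\<Sum>t\<in>{1..nat \<lfloor>\<sigma> * real n\<rfloor>}. ((real t / (\<sigma> * real n)) powr \<alpha> / 2) ^ t) \<le> M / (\<sigma> * real n) powr \<alpha>"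
    if n: "n \<ge> 1" for n
  proof -
    let ?N = "nat \<lfloor>\<sigma> * real n\<rfloor>"
    have sn: "\<sigma> * real n > 0" using \<sigma> n by simp
    have trm: "((real t / (\<sigma> * real n)) powr \<alpha> / 2) ^ t \<le> K * q ^ t / (\<sigma> * real n) powr \<alpha>"
      if t: "t \<in> {1..?N}" for t
    proof -
      have t1: "t \<ge> 1" using t by simp
      have "real t \<le> \<sigma> * real n" using t by (simp add: le_nat_floor) linarith
      hence r1: "real t / (\<sigma> * real n) \<le> 1" using sn by simp
      define a where "a = (real t / (\<sigma> * real n)) powr \<alpha>"
      have a0: "a \<ge> 0" unfolding a_def by simp
      have a1: "a \<le> 1" unfolding a_def using r1 \<alpha> sn by (intro powr_le1) auto
      have e1: "(a / 2) ^ t \<le> a / 2 ^ t"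
      proof -
        have "a ^ t \<le> a ^ 1" by (rule power_decreasing[OF t1 a0 a1])
        hence "a ^ t / 2 ^ t \<le> a / 2 ^ t" by (simp add: divide_right_mono)
        thus ?thesis by (simp add: power_divide)
      qed
      have aeq: "a = real t powr \<alpha> / (\<sigma> * real n) powr \<alpha>" unfolding a_def using sn by (simp add: powr_divide)
      have sq: "sqrt 2 / 2 = q" unfolding q_def by (simp add: field_simps)
      have q2: "sqrt 2 ^ t / 2 ^ t = q ^ t" using sq by (simp add: power_divide[symmetric])
      have "a / 2 ^ t \<le> K * sqrt 2 ^ t / (\<sigma> * real n) powr \<alpha> / 2 ^ t"
        unfolding aeq by (intro divide_right_mono K(2)) auto
      also have "K * sqrt 2 ^ t / (\<sigma> * real n) powr \<alpha> / 2 ^ t = K * (sqrt 2 ^ t / 2 ^ t) / (\<sigma> * real n) powr \<alpha>"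
        by simp
      also have "\<dots> = K * q ^ t / (\<sigma> * real n) powr \<alpha>" by (simp only: q2)
      finally have e2: "a / 2 ^ t \<le> K * q ^ t / (\<sigma> * real n) powr \<alpha>" .
      show ?thesis using e1 e2 unfolding a_def by linarith
    qed
    have "(\<Sum>t\<in>{1..?N}. ((real t / (\<sigma> * real n)) powr \<alpha> / 2) ^ t) \<le> (\<Sum>t\<in>{1..?N}. K * q ^ t / (\<sigma> * real n) powr \<alpha>)"
      by (rule sum_mono) (rule trm)
    also have "\<dots> = K * (\<Sum>t\<in>{1..?N}. q ^ t) / (\<sigma> * real n) powr \<alpha>"
      by (simp add: sum_divide_distrib sum_distrib_left)
    also have "(\<Sum>t\<in>{1..?N}. q ^ t) \<le> (\<Sum>t. q ^ t)"
      by (rule sum_le_suminf) (use q0 q1 in \<open>auto intro: summable_geometric\<close>)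
    hence "K * (\<Sum>t\<in>{1..?N}. q ^ t) / (\<sigma> * real n) powr \<alpha> \<le> K * (\<Sum>t. q ^ t) / (\<sigma> * real n) powr \<alpha>"
      using K(1) by (intro divide_right_mono mult_left_mono) auto
    also have "(\<Sum>t. q ^ t) = 1 / (1 - q)" using q0 q1 by (simp add: suminf_geometric)
    finally show ?thesis unfolding M_def by simp
  qed
  show ?thesis
  proof (rule tendsto_sandwich[of "\<lambda>_. 0" _ _ "\<lambda>n. M / (\<sigma> * real n) powr \<alpha>"])
    show "\<forall>\<^sub>F n in sequentially. 0 \<le> (\<Sum>t\<in>{1..nat \<lfloor>\<sigma> * real n\<rfloor>}. ((real t / (\<sigma> * real n)) powr \<alpha> / 2) ^ t)"
      by (intro always_eventually allI sum_nonneg) simp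
    show "\<forall>\<^sub>F n in sequentially. (\<Sum>t\<in>{1..nat \<lfloor>\<sigma> * real n\<rfloor>}. ((real t / (\<sigma> * real n)) powr \<alpha> / 2) ^ t) \<le> M / (\<sigma> * real n) powr \<alpha>"
      using eventually_ge_at_top[of 1] by eventually_elim (rule bound)
    show "(\<lambda>n. M / (\<sigma> * real n) powr \<alpha>) \<longlonglongrightarrow> 0" by (rule lim_aux[OF \<alpha> \<sigma>])
  qed simp
qed

definition pairsIn :: "nat set \<Rightarrow> (nat \<times> nat) set" where
  "pairsIn U = {(i,j). i < j \<and> i \<in> U \<and> j \<in> U}"
definition cross :: "nat set \<Rightarrow> nat set \<Rightarrow> (nat \<times> nat) set" where
  "cross T S = {(i,j). i < j \<and> ((i \<in> T \<and> j \<in> S - T) \<or> (j \<in> T \<and> i \<in> S - T))}"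

lemma pairsIn_adm: "U \<subseteq> {..<n} \<Longrightarrow> pairsIn U \<subseteq> adm n"
  by (auto simp: pairsIn_def adm_def)

lemma cross_adm: "S \<subseteq> {..<n} \<Longrightarrow> T \<subseteq> S \<Longrightarrow> cross T S \<subseteq> adm n"
  by (auto simp: cross_def adm_def)

lemma finite_pairsIn: "finite U \<Longrightarrow> finite (pairsIn U)"
  by (rule finite_subset[of _ "U \<times> U"]) (auto simp: pairsIn_def)

lemma finite_cross: "finite S \<Longrightarrow> T \<subseteq> S \<Longrightarrow> finite (cross T S)"
  by (rule finite_subset[of _ "S \<times> S"]) (auto simp: cross_def)

lemma card_pairsIn: assumes "finite U" shows "real (card (pairsIn U)) \<le> real (card U) ^ 2 / 2"
proof -
  have fin: "finite (pairsIn U)" using assms by (rule finite_pairsIn)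
  have "pairsIn U \<union> prod.swap ` pairsIn U \<subseteq> U \<times> U" by (auto simp: pairsIn_def)
  hence "card (pairsIn U \<union> prod.swap ` pairsIn U) \<le> card (U \<times> U)"
    using assms by (intro card_mono) auto
  moreover have "card (pairsIn U \<union> prod.swap ` pairsIn U) = card (pairsIn U) + card (prod.swap ` pairsIn U)"
    using fin by (intro card_Un_disjoint) (auto simp: pairsIn_def)
  moreover have "card (prod.swap ` pairsIn U) = card (pairsIn U)" by (rule card_image) (auto simp: inj_on_def)
  ultimately have "2 * card (pairsIn U) \<le> card U * card U" by (simp add: card_cartesian_product)
  hence "2 * real (card (pairsIn U)) \<le> real (card U) * real (card U)" by (metis of_nat_le_iff of_nat_mult of_nat_numeral)
  thus ?thesis by (simp add: power2_eq_square)
qed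

lemma card_cross: assumes "finite S" "T \<subseteq> S" shows "real (card (cross T S)) \<le> real (card S) ^ 2"
proof -
  have "cross T S \<subseteq> S \<times> S" using assms(2) by (auto simp: cross_def)
  hence "card (cross T S) \<le> card (S \<times> S)" using assms by (intro card_mono) auto
  hence "card (cross T S) \<le> card S * card S" by (simp add: card_cartesian_product)
  hence "real (card (cross T S)) \<le> real (card S) * real (card S)" by (metis of_nat_le_iff of_nat_mult)
  thus ?thesis by (simp add: power2_eq_square)
qed

lemma deg_split:
  assumes S: "finite S" and TS: "T \<subseteq> S"
  shows "(\<Sum>v\<in>T. real (degIn G S v)) \<le> 2 * real (card (pairsIn T \<inter> {e. G e})) + real (card (cross T S \<inter> {e. G e}))"
proof -
  have T: "finite T" using S TS finite_subset by blast
  define E where "E = pairsIn T \<inter> {e. G e}"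
  define X where "X = cross T S \<inter> {e. G e}"
  have finE: "finite E" unfolding E_def using T by (simp add: finite_pairsIn)
  have finX: "finite X" unfolding X_def using S TS by (simp add: finite_cross)
  have split: "degIn G S v = card {u\<in>T. adj G u v} + card {u\<in>S - T. adj G u v}" for v
  proof -
    have "{u\<in>S. adj G u v} = {u\<in>T. adj G u v} \<union> {u\<in>S - T. adj G u v}" using TS by auto
    moreover have "card ({u\<in>T. adj G u v} \<union> {u\<in>S - T. adj G u v}) = card {u\<in>T. adj G u v} + card {u\<in>S - T. adj G u v}"
      using S T by (intro card_Un_disjoint) auto
    ultimately show ?thesis unfolding degIn_def by simp
  qed
  have s1: "(\<Sum>v\<in>T. card {u\<in>T. adj G u v}) \<le> 2 * card E"
  proof -
    have "(\<Sum>v\<in>T. card {u\<in>T. adj G u v}) = card (SIGMA v:T. {u\<in>T. adj G u v})"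
      using T by (simp add: card_SigmaI)
    also have "(SIGMA v:T. {u\<in>T. adj G u v}) \<subseteq> E \<union> prod.swap ` E"
    proof
      fix x assume "x \<in> (SIGMA v:T. {u\<in>T. adj G u v})"
      then obtain v u where x: "x = (v, u)" "v \<in> T" "u \<in> T" "adj G u v" by auto
      show "x \<in> E \<union> prod.swap ` E"
      proof (cases "v < u")
        case True thus ?thesis using x by (auto simp: E_def pairsIn_def adj_def min_def max_def)
      next
        case False
        hence "u < v" using x by (auto simp: adj_def)
        hence "(u, v) \<in> E" using x by (auto simp: E_def pairsIn_def adj_def min_def max_def)
        hence "prod.swap (u, v) \<in> prod.swap ` E" by blast
        thus ?thesis using x by simp
      qed
    qed
    hence "card (SIGMA v:T. {u\<in>T. adj G u v}) \<le> card (E \<union> prod.swap ` E)"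
      using finE by (intro card_mono) auto
    also have "\<dots> \<le> card E + card (prod.swap ` E)" by (rule card_Un_le)
    also have "card (prod.swap ` E) \<le> card E" by (rule card_image_le[OF finE])
    finally show ?thesis by simp
  qed
  have s2: "(\<Sum>v\<in>T. card {u\<in>S - T. adj G u v}) \<le> card X"
  proof -
    have "(\<Sum>v\<in>T. card {u\<in>S - T. adj G u v}) = card (SIGMA v:T. {u\<in>S - T. adj G u v})"
      using T S by (simp add: card_SigmaI)
    also have "\<dots> \<le> card X"
    proof (rule card_inj_on_le[where f = "\<lambda>(v,u). (min v u, max v u)"])
      show "inj_on (\<lambda>(v,u). (min v u, max v u)) (SIGMA v:T. {u\<in>S - T. adj G u v})"
        by (auto simp: inj_on_def min_def max_def split: if_splits)
      show "(\<lambda>(v,u). (min v u, max v u)) ` (SIGMA v:T. {u\<in>S - T. adj G u v}) \<subseteq> X"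
      proof
        fix x assume "x \<in> (\<lambda>(v,u). (min v u, max v u)) ` (SIGMA v:T. {u\<in>S - T. adj G u v})"
        then obtain v u where x: "x = (min v u, max v u)" "v \<in> T" "u \<in> S" "u \<notin> T" "adj G u v" by auto
        have uv: "u \<noteq> v" and g: "G (min u v, max u v)" using x(5) by (auto simp: adj_def)
        show "x \<in> X"
        proof (cases "v < u")
          case True
          hence "x = (v, u)" using x(1) by simp
          thus ?thesis using True x g by (simp add: X_def cross_def min_def max_def)
        next
          case False
          hence "u < v" using uv by simp
          hence "x = (u, v)" using x(1) by simp
          thus ?thesis using \<open>u < v\<close> x g by (simp add: X_def cross_def min_def max_def)
        qed
      qed
      show "finite X" by (rule finX)
    qed
    finally show ?thesis .
  qed
  have "(\<Sum>v\<in>T. real (degIn G S v)) = real (\<Sum>v\<in>T. card {u\<in>T. adj G u v}) + real (\<Sum>v\<in>T. card {u\<in>S - T. adj G u v})"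
    by (simp add: split sum.distrib)
  also have "\<dots> \<le> real (2 * card E) + real (card X)" using s1 s2 by linarith
  finally show ?thesis unfolding E_def X_def by simp
qed

lemma pick:
  assumes "finite X" "x \<le> real (card X)"
  shows "\<exists>F\<subseteq>X. card F = nat \<lceil>x\<rceil>"
proof -
  have "\<lceil>x\<rceil> \<le> int (card X)" using assms(2) by (simp add: ceiling_le_iff)
  hence "nat \<lceil>x\<rceil> \<le> card X" by linarith
  thus ?thesis using obtain_subset_with_card_n by metis
qed

lemma bad_imp:
  assumes bad: "bad_pair n \<sigma> \<tau> \<Delta> G" and \<theta>: "\<theta> > 0" and tau: "\<tau> > 0" and m: "(\<Delta> - 2 * \<theta>) * \<tau> > 1"
  shows "(\<exists>U. U \<subseteq> {..<n} \<and> U \<noteq> {} \<and> real (card U) \<le> \<sigma> * real n \<and>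
            (\<exists>F. F \<subseteq> pairsIn U \<and> card F = nat \<lceil>\<theta> * real (card U)\<rceil> \<and> (\<forall>e\<in>F. G e)))
       \<or> (\<exists>S T. S \<subseteq> {..<n} \<and> S \<noteq> {} \<and> real (card S) \<le> \<sigma> * real n \<and> T \<subseteq> S \<and>
            (\<exists>F. F \<subseteq> cross T S \<and> card F = nat \<lceil>(\<Delta> - 2 * \<theta>) * \<tau> * real (card S)\<rceil> \<and> (\<forall>e\<in>F. G e)))"
proof -
  obtain S T where TS: "T \<subseteq> S" and Sn: "S \<subseteq> {..<n}" and Sne: "S \<noteq> {}" and Ss: "real (card S) \<le> \<sigma> * real n"
    and Tt: "real (card T) \<ge> \<tau> * real (card S)" and deg: "\<forall>v\<in>T. real (degIn G S v) \<ge> \<Delta>"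
    using bad unfolding bad_pair_def by blast
  have finS: "finite S" using Sn finite_subset by blast
  have finT: "finite T" using TS finS finite_subset by blast
  have "card S > 0" using finS Sne by (simp add: card_gt_0_iff)
  hence s1: "real (card S) \<ge> 1" by linarith
  have Dpos: "\<Delta> - 2 * \<theta> > 0"
  proof (rule ccontr)
    assume "\<not> \<Delta> - 2 * \<theta> > 0"
    hence "(\<Delta> - 2 * \<theta>) * \<tau> \<le> 0" using tau by (simp add: mult_nonpos_nonneg)
    thus False using m by simp
  qed
  have tpos: "real (card T) > 0" using Tt tau s1 by (smt (verit) mult_pos_pos)
  hence Tne: "T \<noteq> {}" by auto
  define E where "E = pairsIn T \<inter> {e. G e}"
  define X where "X = cross T S \<inter> {e. G e}"
  have finE: "finite E" unfolding E_def using finT by (simp add: finite_pairsIn)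
  have finX: "finite X" unfolding X_def using finS TS by (simp add: finite_cross)
  have "\<Delta> * real (card T) = (\<Sum>v\<in>T. \<Delta>)" by simp
  also have "\<dots> \<le> (\<Sum>v\<in>T. real (degIn G S v))" using deg by (intro sum_mono) auto
  also have "\<dots> \<le> 2 * real (card E) + real (card X)" unfolding E_def X_def by (rule deg_split[OF finS TS])
  finally have key: "\<Delta> * real (card T) \<le> 2 * real (card E) + real (card X)" .
  show ?thesis
  proof (cases "\<theta> * real (card T) \<le> real (card E)")
    case True
    then obtain F where F: "F \<subseteq> E" "card F = nat \<lceil>\<theta> * real (card T)\<rceil>" using pick[OF finE] by blast
    have "real (card T) \<le> real (card S)" using card_mono[OF finS TS] by simp
    hence "real (card T) \<le> \<sigma> * real n" using Ss by linarith
    moreover have "T \<subseteq> {..<n}" using TS Sn by blast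
    moreover have "\<exists>F. F \<subseteq> pairsIn T \<and> card F = nat \<lceil>\<theta> * real (card T)\<rceil> \<and> (\<forall>e\<in>F. G e)"
      using F unfolding E_def by blast
    ultimately show ?thesis using Tne by (intro disjI1 exI[of _ T]) simp
  next
    case False
    have "(\<Delta> - 2 * \<theta>) * \<tau> * real (card S) \<le> (\<Delta> - 2 * \<theta>) * real (card T)"
      using Tt Dpos by (simp add: mult.assoc)
    also have "\<dots> \<le> real (card X)" using key False by (simp add: algebra_simps)
    finally obtain F where F: "F \<subseteq> X" "card F = nat \<lceil>(\<Delta> - 2 * \<theta>) * \<tau> * real (card S)\<rceil>"
      using pick[OF finX] by blast
    have "\<exists>F. F \<subseteq> cross T S \<and> card F = nat \<lceil>(\<Delta> - 2 * \<theta>) * \<tau> * real (card S)\<rceil> \<and> (\<forall>e\<in>F. G e)"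
      using F unfolding X_def by blast
    thus ?thesis using Sn Sne Ss TS by (intro disjI2 exI[of _ S] exI[of _ T]) simp
  qed
qed

lemma le_nat_floor_real: assumes "1 \<le> t" "t \<le> nat \<lfloor>x\<rfloor>" shows "real t \<le> x"
proof -
  have "\<lfloor>x\<rfloor> \<ge> 0" using assms by linarith
  hence "int t \<le> \<lfloor>x\<rfloor>" using assms(2) by (simp add: le_nat_iff)
  hence "real_of_int (int t) \<le> x" by (simp only: le_floor_iff)
  thus ?thesis by simp
qed

lemma union_le:
  assumes "finite I" "\<And>i. i \<in> I \<Longrightarrow> measure_pmf.prob M (A i) \<le> f i"
  shows "measure_pmf.prob M (\<Union>i\<in>I. A i) \<le> (\<Sum>i\<in>I. f i)"
  by (rule order.trans[OF measure_pmf.finite_measure_subadditive_finite sum_mono]) (use assms in auto)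

lemma finite_subsets_card: "finite A \<Longrightarrow> finite {U. U \<subseteq> A \<and> card U = t}"
  by (rule finite_subset[of _ "Pow A"]) auto

lemma sum_subsets_const: "(\<Sum>U\<in>{U. U \<subseteq> {..<n} \<and> card U = t}. (c::real)) = real (n choose t) * c"
  by (simp add: n_subsets)

lemma prob_bound:
  fixes n :: nat and \<sigma> \<theta> \<tau> \<Delta> D :: real
  assumes n: "n > 0" and \<sigma>: "0 < \<sigma>" "\<sigma> \<le> 1" and \<theta>: "\<theta> > 1" and tau: "\<tau> > 0"
    and m: "(\<Delta> - 2 * \<theta>) * \<tau> > 1" and D: "D \<ge> 0" "D / real n \<le> 1"
    and hA: "(\<sigma> * exp 1 * D / (2 * \<theta>)) powr \<theta> \<le> \<sigma> / (2 * exp 1)"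
    and hB: "(\<sigma> * exp 1 * D / ((\<Delta> - 2 * \<theta>) * \<tau>)) powr ((\<Delta> - 2 * \<theta>) * \<tau>) \<le> \<sigma> / (4 * exp 1)"
  shows "measure_pmf.prob (gnp n (D / real n)) {G. bad_pair n \<sigma> \<tau> \<Delta> G}
     \<le> (\<Sum>t\<in>{1..nat \<lfloor>\<sigma> * real n\<rfloor>}. ((real t / (\<sigma> * real n)) powr (\<theta> - 1) / 2) ^ t)
      + (\<Sum>t\<in>{1..nat \<lfloor>\<sigma> * real n\<rfloor>}. ((real t / (\<sigma> * real n)) powr ((\<Delta> - 2 * \<theta>) * \<tau> - 1) / 2) ^ t)"
proof -
  define m where "m = (\<Delta> - 2 * \<theta>) * \<tau>"
  define p where "p = D / real n"
  define N where "N = nat \<lfloor>\<sigma> * real n\<rfloor>"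
  have p0: "0 \<le> p" and p1: "p \<le> 1" using D n unfolding p_def by auto
  have m1: "m > 1" using m unfolding m_def .
  define EA where "EA = (\<Union>t\<in>{1..N}. \<Union>U\<in>{U. U \<subseteq> {..<n} \<and> card U = t}.
                          \<Union>F\<in>{F. F \<subseteq> pairsIn U \<and> card F = nat \<lceil>\<theta> * real t\<rceil>}. ev F)"
  define EB where "EB = (\<Union>s\<in>{1..N}. \<Union>S\<in>{S. S \<subseteq> {..<n} \<and> card S = s}. \<Union>T\<in>Pow S.
                          \<Union>F\<in>{F. F \<subseteq> cross T S \<and> card F = nat \<lceil>m * real s\<rceil>}. ev F)"
  have incl: "{G. bad_pair n \<sigma> \<tau> \<Delta> G} \<subseteq> EA \<union> EB"
  proof
    fix G assume "G \<in> {G. bad_pair n \<sigma> \<tau> \<Delta> G}"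
    hence bad: "bad_pair n \<sigma> \<tau> \<Delta> G" by simp
    have \<theta>0: "\<theta> > 0" using \<theta> by simp
    from bad_imp[OF bad \<theta>0 tau m] show "G \<in> EA \<union> EB"
    proof (elim disjE exE conjE)
      fix U F assume U: "U \<subseteq> {..<n}" "U \<noteq> {}" "real (card U) \<le> \<sigma> * real n"
        and F: "F \<subseteq> pairsIn U" "card F = nat \<lceil>\<theta> * real (card U)\<rceil>" "\<forall>e\<in>F. G e"
      have "finite U" using U(1) finite_subset by blast
      hence "card U \<ge> 1" using U(2) by (simp add: Suc_le_eq card_gt_0_iff)
      moreover have "card U \<le> N" unfolding N_def using U(3) by (rule le_nat_floor)
      ultimately have t: "card U \<in> {1..N}" by simp
      have "G \<in> EA" unfolding EA_def
        by (rule UN_I[OF t], rule UN_I[of U], use U in simp, rule UN_I[of F]) (use F in \<open>auto simp: ev_def\<close>)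
      thus ?thesis by simp
    next
      fix S T F assume S: "S \<subseteq> {..<n}" "S \<noteq> {}" "real (card S) \<le> \<sigma> * real n" "T \<subseteq> S"
        and F: "F \<subseteq> cross T S" "card F = nat \<lceil>(\<Delta> - 2 * \<theta>) * \<tau> * real (card S)\<rceil>" "\<forall>e\<in>F. G e"
      have "finite S" using S(1) finite_subset by blast
      hence "card S \<ge> 1" using S(2) by (simp add: Suc_le_eq card_gt_0_iff)
      moreover have "card S \<le> N" unfolding N_def using S(3) by (rule le_nat_floor)
      ultimately have s: "card S \<in> {1..N}" by simp
      have "G \<in> EB" unfolding EB_def
        by (rule UN_I[OF s], rule UN_I[of S], use S in simp, rule UN_I[of T], use S in simp, rule UN_I[of F])
           (use F in \<open>auto simp: ev_def m_def\<close>)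
      thus ?thesis by simp
    qed
  qed
  have "measure_pmf.prob (gnp n p) {G. bad_pair n \<sigma> \<tau> \<Delta> G} \<le> measure_pmf.prob (gnp n p) (EA \<union> EB)"
    using incl by (intro measure_pmf.finite_measure_mono) auto
  also have "\<dots> \<le> measure_pmf.prob (gnp n p) EA + measure_pmf.prob (gnp n p) EB"
    by (rule measure_Un_le) auto
  also have "measure_pmf.prob (gnp n p) EA \<le> (\<Sum>t\<in>{1..N}. ((real t / (\<sigma> * real n)) powr (\<theta> - 1) / 2) ^ t)"
    unfolding EA_def
  proof (rule union_le, simp)
    fix t assume t: "t \<in> {1..N}"
    have t1: "t \<ge> 1" using t by simp
    have tN: "real t \<le> \<sigma> * real n" using t unfolding N_def by (intro le_nat_floor_real) auto
    define k where "k = nat \<lceil>\<theta> * real t\<rceil>"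
    have k1: "k \<ge> 1" unfolding k_def using \<theta> t1 by (simp add: Suc_le_eq)
    define c where "c = (exp 1 * (real t ^ 2 / 2) * p / real k) ^ k"
    have "measure_pmf.prob (gnp n p) (\<Union>U\<in>{U. U \<subseteq> {..<n} \<and> card U = t}.
              \<Union>F\<in>{F. F \<subseteq> pairsIn U \<and> card F = k}. ev F) \<le> (\<Sum>U\<in>{U. U \<subseteq> {..<n} \<and> card U = t}. c)"
    proof (rule union_le)
      show "finite {U. U \<subseteq> {..<n} \<and> card U = t}" by (rule finite_subsets_card) simp
      fix U assume U: "U \<in> {U. U \<subseteq> {..<n} \<and> card U = t}"
      have finU: "finite U" using U finite_subset by blast
      show "measure_pmf.prob (gnp n p) (\<Union>F\<in>{F. F \<subseteq> pairsIn U \<and> card F = k}. ev F) \<le> c"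
        unfolding c_def using U card_pairsIn[OF finU]
        by (intro fam_bound pairsIn_adm p0 p1 k1) auto
    qed
    also have "\<dots> = real (n choose t) * 1 ^ t * c" by (subst sum_subsets_const) simp
    also have "\<dots> \<le> ((real t / (\<sigma> * real n)) powr (\<theta> - 1) / 2) ^ t"
      unfolding c_def k_def p_def
      by (rule term_bound[OF n t1 tN \<sigma> \<theta> D(1)]) (use hA in auto)
    finally show "measure_pmf.prob (gnp n p) (\<Union>U\<in>{U. U \<subseteq> {..<n} \<and> card U = t}.
              \<Union>F\<in>{F. F \<subseteq> pairsIn U \<and> card F = nat \<lceil>\<theta> * real t\<rceil>}. ev F)
          \<le> ((real t / (\<sigma> * real n)) powr (\<theta> - 1) / 2) ^ t" unfolding k_def .
  qed
  also have "measure_pmf.prob (gnp n p) EB \<le> (\<Sum>t\<in>{1..N}. ((real t / (\<sigma> * real n)) powr (m - 1) / 2) ^ t)"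
    unfolding EB_def
  proof (rule union_le, simp)
    fix s assume s: "s \<in> {1..N}"
    have s1: "s \<ge> 1" using s by simp
    have sN: "real s \<le> \<sigma> * real n" using s unfolding N_def by (intro le_nat_floor_real) auto
    define k where "k = nat \<lceil>m * real s\<rceil>"
    have k1: "k \<ge> 1" unfolding k_def using m1 s1 by (simp add: Suc_le_eq)
    define c where "c = (exp 1 * (real s ^ 2 / 1) * p / real k) ^ k"
    have "measure_pmf.prob (gnp n p) (\<Union>S\<in>{S. S \<subseteq> {..<n} \<and> card S = s}. \<Union>T\<in>Pow S.
              \<Union>F\<in>{F. F \<subseteq> cross T S \<and> card F = k}. ev F) \<le> (\<Sum>S\<in>{S. S \<subseteq> {..<n} \<and> card S = s}. 2 ^ s * c)"
    proof (rule union_le)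
      show "finite {S. S \<subseteq> {..<n} \<and> card S = s}" by (rule finite_subsets_card) simp
      fix S assume S: "S \<in> {S. S \<subseteq> {..<n} \<and> card S = s}"
      have finS: "finite S" using S finite_subset by blast
      have "measure_pmf.prob (gnp n p) (\<Union>T\<in>Pow S. \<Union>F\<in>{F. F \<subseteq> cross T S \<and> card F = k}. ev F) \<le> (\<Sum>T\<in>Pow S. c)"
      proof (rule union_le)
        show "finite (Pow S)" using finS by simp
        fix T assume T: "T \<in> Pow S"
        show "measure_pmf.prob (gnp n p) (\<Union>F\<in>{F. F \<subseteq> cross T S \<and> card F = k}. ev F) \<le> c"
          unfolding c_def using S T card_cross[OF finS, of T]
          by (intro fam_bound cross_adm p0 p1 k1) auto
      qed
      also have "(\<Sum>T\<in>Pow S. c) = 2 ^ s * c" using S finS by (simp add: card_Pow)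
      finally show "measure_pmf.prob (gnp n p) (\<Union>T\<in>Pow S. \<Union>F\<in>{F. F \<subseteq> cross T S \<and> card F = k}. ev F) \<le> 2 ^ s * c" .
    qed
    also have "\<dots> = real (n choose s) * 2 ^ s * c" by (subst sum_subsets_const) simp
    also have "\<dots> \<le> ((real s / (\<sigma> * real n)) powr (m - 1) / 2) ^ s"
      unfolding c_def k_def p_def
      by (rule term_bound[OF n s1 sN \<sigma> m1 D(1)]) (use hB in \<open>auto simp: m_def\<close>)
    finally show "measure_pmf.prob (gnp n p) (\<Union>S\<in>{S. S \<subseteq> {..<n} \<and> card S = s}. \<Union>T\<in>Pow S.
              \<Union>F\<in>{F. F \<subseteq> cross T S \<and> card F = nat \<lceil>m * real s\<rceil>}. ev F)
          \<le> ((real s / (\<sigma> * real n)) powr (m - 1) / 2) ^ s" unfolding k_def .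
  qed
  finally show ?thesis unfolding p_def N_def m_def by simp
qed

theorem lemma2:
  fixes d :: "nat \<Rightarrow> real" and \<sigma> \<theta> \<Delta> \<tau> :: real
  assumes d_nonneg: "\<And>n. d n \<ge> 0"
    and theta: "\<theta> > 1"
    and sigma: "0 < \<sigma>" "\<sigma> \<le> 1"
    and hyp_theta: "eventually (\<lambda>n. (\<sigma> * exp 1 * d n / (2 * \<theta>)) powr \<theta> \<le> \<sigma> / (2 * exp 1)) at_top"
    and d_small_theta: "d \<in> o(\<lambda>n. real n powr (1 - 1 / \<theta>))"
    and Delta: "\<Delta> > 0" and tau: "\<tau> > 0"
    and m_gt: "(\<Delta> - 2 * \<theta>) * \<tau> > 1"
    and hyp_m: "eventually (\<lambda>n. (\<sigma> * exp 1 * d n / ((\<Delta> - 2 * \<theta>) * \<tau>)) powr ((\<Delta> - 2 * \<theta>) * \<tau>)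
                   \<le> \<sigma> / (4 * exp 1)) at_top"
    and d_small_m: "d \<in> o(\<lambda>n. real n powr (1 - 1 / ((\<Delta> - 2 * \<theta>) * \<tau>)))"
  shows "(\<lambda>n. measure_pmf.prob (gnp n (d n / real n)) {G. bad_pair n \<sigma> \<tau> \<Delta> G}) \<longlonglongrightarrow> 0"
proof -
  define m where "m = (\<Delta> - 2 * \<theta>) * \<tau>"
  have m1: "m > 1" using m_gt unfolding m_def .
  define sA where "sA = (\<lambda>n. \<Sum>t\<in>{1..nat \<lfloor>\<sigma> * real n\<rfloor>}. ((real t / (\<sigma> * real n)) powr (\<theta> - 1) / 2) ^ t)"
  define sB where "sB = (\<lambda>n. \<Sum>t\<in>{1..nat \<lfloor>\<sigma> * real n\<rfloor>}. ((real t / (\<sigma> * real n)) powr (m - 1) / 2) ^ t)"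
  have c4: "\<sigma> / (4 * exp 1) < 1"
  proof -
    have "exp 1 \<ge> (2::real)" using exp_ge_add_one_self[of 1] by simp
    hence "\<sigma> < 4 * exp 1" using sigma by linarith
    thus ?thesis by (simp add: divide_less_eq)
  qed
  have ev: "eventually (\<lambda>n. measure_pmf.prob (gnp n (d n / real n)) {G. bad_pair n \<sigma> \<tau> \<Delta> G} \<le> sA n + sB n) sequentially"
    using hyp_theta hyp_m eventually_ge_at_top[of "nat \<lceil>m / (\<sigma> * exp 1)\<rceil> + 1"]
  proof eventually_elim
    case (elim n)
    have n: "n > 0" using elim(3) by simp
    have z1: "\<sigma> * exp 1 * d n / m \<le> 1"
      using powr_lt1_imp[OF _ _ _ c4, of "\<sigma> * exp 1 * d n / m" m] elim(2) m1 sigma d_nonneg[of n]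
      unfolding m_def by simp
    hence "d n \<le> m / (\<sigma> * exp 1)" using m1 sigma by (simp add: field_simps)
    also have "\<dots> \<le> real n" using elim(3) by linarith
    finally have Dn: "d n / real n \<le> 1" using n by simp
    show ?case unfolding sA_def sB_def m_def
      by (rule prob_bound[OF n sigma theta tau m_gt d_nonneg[of n] Dn elim(1) elim(2)])
  qed
  have lim: "(\<lambda>n. sA n + sB n) \<longlonglongrightarrow> 0"
    using tendsto_add[OF sum_to_0[of "\<theta> - 1" \<sigma>] sum_to_0[of "m - 1" \<sigma>]] theta m1 sigma
    unfolding sA_def sB_def by simp
  show ?thesis
    by (rule tendsto_sandwich[OF _ ev _ lim]) auto
qed

end
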